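(* Fix $\gamma>1$, $\zeta_0>1$, $S_0>0$, $J>0$, $E_0<0$ with $(u_0,E_0)\in\mathcal T_{\rm acc}$, and let $(\bar u_1,\bar E)$ and $l_{\max}$ be as in the context. Define on $[0,l_{\max})$ $$\bar a_{11}:=1-\frac{\bar u_1^{\gamma+1}}{u_s^{\gamma+1}},\qquad \bar a:=\frac{\bar u_1^{\gamma-1}\big(\bar E-(\gamma+1)\bar u_1'\bar u_1\big)}{\gamma S_0J^{\gamma-1}},$$ regarded as functions of $\mathbf x=(x_1,x_2)$ depending only on $x_1$. Then for each $L\in(0,l_{\max})$ there exists a constant $\lambda_L>0$ such that, with $\Omega_L=(0,L)\times(-1,1)$: (a) $-\partial_1\bar a_{11}\ge\lambda_L$ in $\overline{\Omega_L}$; (b) $-\bar a\ge\lambda_L$ in $\overline{\Omega_L}$; (c) $-2\bar a-(2m-1)\partial_1\bar a_{11}\ge\lambda_L$ in $\overline{\Omega_L}$ for $m=0,1,2,3$; (d) setting $\mathfrak a_1(L):=\min_{\overline{\Omega_L}}(-\partial_1\bar a_{11})$, $\mathfrak a_2(L):=\min_{\overline{\Omega_L}}(-\bar a)$, $\mathfrak c_m(L):=\min_{\overline{\Omega_L}}(-2\bar a-(2m-1)\partial_1\bar a_{11})$ for $m=0,1,2,3$, one has $\lim_{L\to l_{\max}-}\mathfrak a_1(L)=\lim_{L\to l_{\max}-}\mathfrak a_2(L)=\lim_{L\to l_{\max}-}\mathfrak c_m(L)=0$ for $m=0,1,2,3$.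
   Context: Given $\gamma>1$, $J>0$, $S_0>0$, $\zeta_0>1$: $u_s:=(\gamma S_0J^{\gamma-1})^{1/(\gamma+1)}$, $\bar u_i:=\zeta_0u_s$, $\bar\rho_i:=J/\bar u_i$, $H(u):=\int_{u_s}^{u}\frac{J}{\bar u_i t^{\gamma+1}}(t^{\gamma+1}-u_s^{\gamma+1})(\bar u_i-t)\,dt$, $\mathcal T_{\rm acc}:=\{(u,E):u>0,\ \tfrac12E^2=H(u),\ (u-u_s)E\ge0\}$ (for $E_0<0$, $0<u_0<u_s$). $(\bar u_1,\bar E)$ is the solution of $\bar u_1'=\bar E\bar u_1^\gamma/(\bar u_1^{\gamma+1}-u_s^{\gamma+1})$, $\bar E'=J/\bar u_1-\bar\rho_i$, $(\bar u_1,\bar E)(0)=(u_0,E_0)$; it is smooth with $\bar u_1'>0$ on its maximal interval $[0,l_{\max})$, $l_{\max}<\infty$, and $\lim_{x_1\to l_{\max}-}\bar u_1'(x_1)=0$. ($\bar a_{11}$ and $\bar a$ are the coefficients of the linearization of the potential flow equation at the background state, normalized by the coefficient of $\partial_{22}$.) *)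

theory Defs
  imports "HOL-Analysis.Analysis"
begin

definition u_s :: "real \<Rightarrow> real \<Rightarrow> real \<Rightarrow> real" where
  "u_s \<gamma> S0 J = (\<gamma> * S0 * J powr (\<gamma> - 1)) powr (1 / (\<gamma> + 1))"

definition ubar_i :: "real \<Rightarrow> real \<Rightarrow> real \<Rightarrow> real \<Rightarrow> real" where
  "ubar_i \<gamma> S0 J \<zeta>0 = \<zeta>0 * u_s \<gamma> S0 J"

definition rhobar_i :: "real \<Rightarrow> real \<Rightarrow> real \<Rightarrow> real \<Rightarrow> real" where
  "rhobar_i \<gamma> S0 J \<zeta>0 = J / ubar_i \<gamma> S0 J \<zeta>0"

definition H :: "real \<Rightarrow> real \<Rightarrow> real \<Rightarrow> real \<Rightarrow> real \<Rightarrow> real" where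
  "H \<gamma> S0 J \<zeta>0 u =
     (LBINT t = u_s \<gamma> S0 J..u.
        J / (ubar_i \<gamma> S0 J \<zeta>0 * t powr (\<gamma> + 1))
        * (t powr (\<gamma> + 1) - u_s \<gamma> S0 J powr (\<gamma> + 1)) * (ubar_i \<gamma> S0 J \<zeta>0 - t))"

definition T_acc :: "real \<Rightarrow> real \<Rightarrow> real \<Rightarrow> real \<Rightarrow> (real \<times> real) set" where
  "T_acc \<gamma> S0 J \<zeta>0 = {(u, E). u > 0 \<and> E\<^sup>2 / 2 = H \<gamma> S0 J \<zeta>0 u
                              \<and> (u - u_s \<gamma> S0 J) * E \<ge> 0}"

text \<open>A C^1 solution on [0,l) of the ODE system for (u,E), with derivatives du, dE,
  the u-equation written in the form (u^(g+1) - u_s^(g+1)) u' = E u^g (which is the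
  stated equation wherever u /= u_s, and makes sense through the sonic point),
  with the initial data and u' > 0.\<close>
definition acc_sol ::
  "real \<Rightarrow> real \<Rightarrow> real \<Rightarrow> real \<Rightarrow> real \<Rightarrow> real \<Rightarrow>
   (real \<Rightarrow> real) \<Rightarrow> (real \<Rightarrow> real) \<Rightarrow> (real \<Rightarrow> real) \<Rightarrow> (real \<Rightarrow> real) \<Rightarrow> real \<Rightarrow> bool" where
  "acc_sol \<gamma> S0 J \<zeta>0 u0 E0 u E du dE l \<longleftrightarrow>
     0 < l \<and> u 0 = u0 \<and> E 0 = E0 \<and>
     continuous_on {0..<l} du \<and> continuous_on {0..<l} dE \<and>
     (\<forall>x\<in>{0..<l}.
        u x > 0 \<and> du x > 0 \<and>
        (u has_real_derivative du x) (at x within {0..<l}) \<and>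
        (E has_real_derivative dE x) (at x within {0..<l}) \<and>
        (u x powr (\<gamma> + 1) - u_s \<gamma> S0 J powr (\<gamma> + 1)) * du x = E x * u x powr \<gamma> \<and>
        dE x = J / u x - rhobar_i \<gamma> S0 J \<zeta>0)"

definition Omega :: "real \<Rightarrow> (real \<times> real) set" where
  "Omega L = {0<..<L} \<times> {-1<..<1}"

end

theory Submission
  imports Defs
begin


lemma generic:
  fixes g du :: "real \<Rightarrow> real" and lmax C :: real
  assumes lm: "lmax > 0"
    and cont: "continuous_on {0..<lmax} g"
    and pos: "\<forall>x\<in>{0..<lmax}. g x > 0"
    and bnd: "\<forall>x\<in>{0..<lmax}. g x \<le> C * du x"
    and du_lim: "(du \<longlongrightarrow> 0) (at_left lmax)"
  shows "(\<forall>L\<in>{0<..<lmax}. \<exists>lam>0. \<forall>x\<in>{0..L}. g x \<ge> lam)"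
    and "((\<lambda>L. Inf (g ` {0..L})) \<longlongrightarrow> 0) (at_left lmax)"
proof -
  show "\<forall>L\<in>{0<..<lmax}. \<exists>lam>0. \<forall>x\<in>{0..L}. g x \<ge> lam"
  proof
    fix L assume L: "L \<in> {0<..<lmax}"
    have c: "continuous_on {0..L} g" using L by (intro continuous_on_subset[OF cont]) auto
    obtain x0 where x0: "x0 \<in> {0..L}" "\<forall>y\<in>{0..L}. g x0 \<le> g y"
      using continuous_attains_inf[OF compact_Icc _ c] L by auto
    have "g x0 > 0" using pos x0 L by auto
    then show "\<exists>lam>0. \<forall>x\<in>{0..L}. g x \<ge> lam" using x0 by blast
  qed
  have ev: "eventually (\<lambda>L. 0 \<le> Inf (g ` {0..L}) \<and> Inf (g ` {0..L}) \<le> g L) (at_left lmax)"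
    using eventually_at_left_real[OF lm]
  proof (rule eventually_mono)
    fix L assume L: "L \<in> {0<..<lmax}"
    have "0 \<le> Inf (g ` {0..L})"
      using L pos by (intro cInf_greatest) (auto intro: less_imp_le)
    moreover have "Inf (g ` {0..L}) \<le> g L"
      using L pos by (intro cInf_lower) (auto intro!: bdd_belowI[of _ 0] less_imp_le)
    ultimately show "0 \<le> Inf (g ` {0..L}) \<and> Inf (g ` {0..L}) \<le> g L" by simp
  qed
  have g0: "(g \<longlongrightarrow> 0) (at_left lmax)"
  proof (rule tendsto_sandwich[of "\<lambda>_. 0" g _ "\<lambda>x. C * du x"])
    show "eventually (\<lambda>x. 0 \<le> g x) (at_left lmax)"
      using eventually_at_left_real[OF lm] by eventually_elim (use pos in \<open>force intro: less_imp_le\<close>)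
    show "eventually (\<lambda>x. g x \<le> C * du x) (at_left lmax)"
      using eventually_at_left_real[OF lm] by eventually_elim (use bnd in auto)
    show "((\<lambda>x. C * du x) \<longlongrightarrow> 0) (at_left lmax)"
      using tendsto_mult_right_zero[OF du_lim] by simp
  qed simp
  show "((\<lambda>L. Inf (g ` {0..L})) \<longlongrightarrow> 0) (at_left lmax)"
    by (rule tendsto_sandwich[OF _ _ tendsto_const g0]) (use ev in \<open>auto elim: eventually_mono\<close>)
qed


theorem lemma4p1:
  fixes \<gamma> \<zeta>0 S0 J u0 E0 lmax :: real
    and u E du dE da11 :: "real \<Rightarrow> real"
  assumes "\<gamma> > 1" and "\<zeta>0 > 1" and "S0 > 0" and "J > 0" and "E0 < 0"
    and "0 < u0" and "u0 < u_s \<gamma> S0 J"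
    and "(u0, E0) \<in> T_acc \<gamma> S0 J \<zeta>0"
    and sol: "acc_sol \<gamma> S0 J \<zeta>0 u0 E0 u E du dE lmax"
    and maximal: "\<not> (\<exists>l v F dv dF. l > lmax \<and> acc_sol \<gamma> S0 J \<zeta>0 u0 E0 v F dv dF l
                        \<and> (\<forall>x\<in>{0..<lmax}. v x = u x \<and> F x = E x))"
    and du_lim: "(du \<longlongrightarrow> 0) (at_left lmax)"
    and da11: "\<forall>x\<in>{0..<lmax}.
        ((\<lambda>t. 1 - u t powr (\<gamma> + 1) / u_s \<gamma> S0 J powr (\<gamma> + 1)) has_real_derivative da11 x)
          (at x within {0..<lmax})"
  defines "abar \<equiv> (\<lambda>x. u x powr (\<gamma> - 1) * (E x - (\<gamma> + 1) * du x * u x)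
                         / (\<gamma> * S0 * J powr (\<gamma> - 1)))"
  shows "(\<forall>L\<in>{0<..<lmax}. \<exists>lam>0. \<forall>p\<in>closure (Omega L).
             - da11 (fst p) \<ge> lam \<and> - abar (fst p) \<ge> lam \<and>
             (\<forall>m\<in>{0..3::nat}. - 2 * abar (fst p) - (2 * real m - 1) * da11 (fst p) \<ge> lam))
       \<and> ((\<lambda>L. Inf ((\<lambda>p. - da11 (fst p)) ` closure (Omega L))) \<longlongrightarrow> 0) (at_left lmax)
       \<and> ((\<lambda>L. Inf ((\<lambda>p. - abar (fst p)) ` closure (Omega L))) \<longlongrightarrow> 0) (at_left lmax)
       \<and> (\<forall>m\<in>{0..3::nat}.
            ((\<lambda>L. Inf ((\<lambda>p. - 2 * abar (fst p) - (2 * real m - 1) * da11 (fst p))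
                        ` closure (Omega L))) \<longlongrightarrow> 0) (at_left lmax))"
  
proof -
  define us where "us = u_s \<gamma> S0 J"
  define K where "K = us powr (\<gamma> + 1)"
  have base: "\<gamma> * S0 * J powr (\<gamma> - 1) > 0" using assms(1,3,4) by simp
  have K_eq: "K = \<gamma> * S0 * J powr (\<gamma> - 1)"
    unfolding K_def us_def u_s_def using base assms(1)
    by (simp add: powr_powr)
  have Kpos: "K > 0" using K_eq base by simp
  have us_pos: "u_s \<gamma> S0 J > 0" using base assms(1,3,4) unfolding u_s_def by simp
  have lm: "lmax > 0" and u0E: "u 0 = u0" and cdu: "continuous_on {0..<lmax} du"
    and pt: "\<And>x. x \<in> {0..<lmax} \<Longrightarrow> u x > 0 \<and> du x > 0 \<and>
        (u has_real_derivative du x) (at x within {0..<lmax}) \<and>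
        (E has_real_derivative dE x) (at x within {0..<lmax}) \<and>
        (u x powr (\<gamma> + 1) - us powr (\<gamma> + 1)) * du x = E x * u x powr \<gamma> \<and>
        dE x = J / u x - rhobar_i \<gamma> S0 J \<zeta>0"
    using sol unfolding acc_sol_def us_def by blast+
  have upos: "\<And>x. x \<in> {0..<lmax} \<Longrightarrow> u x > 0" using pt by blast
  have dupos: "\<And>x. x \<in> {0..<lmax} \<Longrightarrow> du x > 0" using pt by blast
  have uder: "\<And>x. x \<in> {0..<lmax} \<Longrightarrow> (u has_real_derivative du x) (at x within {0..<lmax})"
    using pt by blast
  have ode: "\<And>x. x \<in> {0..<lmax} \<Longrightarrow> (u x powr (\<gamma> + 1) - K) * du x = E x * u x powr \<gamma>"
    using pt unfolding K_def by blast
  have ucont: "continuous_on {0..<lmax} u" by (rule DERIV_continuous_on) (rule uder)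
  have uat: "\<And>t. t \<in> {0<..<lmax} \<Longrightarrow> (u has_real_derivative du t) (at t)"
  proof -
    fix t assume t: "t \<in> {0<..<lmax}"
    have "(u has_real_derivative du t) (at t within {0<..<lmax})"
      by (rule has_field_derivative_subset[OF uder]) (use t in auto)
    then show "(u has_real_derivative du t) (at t)"
      using at_within_open[of t "{0<..<lmax}"] t by simp
  qed
  have "eventually (\<lambda>x. du x < 1) (at_left lmax)"
    using du_lim by (rule order_tendstoD) simp
  then obtain b where b: "b < lmax" "\<And>y. b < y \<Longrightarrow> y < lmax \<Longrightarrow> du y < 1"
    unfolding eventually_at_left_field by blast
  define b' where "b' = max b 0"
  have cb: "continuous_on {0..b'} du"
    by (rule continuous_on_subset[OF cdu]) (use b lm in \<open>auto simp: b'_def\<close>)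
  obtain x1 where x1: "x1 \<in> {0..b'}" "\<And>y. y \<in> {0..b'} \<Longrightarrow> du y \<le> du x1"
    using continuous_attains_sup[OF compact_Icc _ cb] by (auto simp: b'_def)
  define B where "B = max 1 (du x1)"
  have Bge: "B \<ge> 1" by (simp add: B_def)
  have duB: "\<And>x. x \<in> {0..<lmax} \<Longrightarrow> du x \<le> B"
  proof -
    fix x assume x: "x \<in> {0..<lmax}"
    show "du x \<le> B"
    proof (cases "x \<le> b'")
      case True then show ?thesis using x x1(2)[of x] by (auto simp: B_def)
    next
      case False
      then have "b < x" by (simp add: b'_def)
      then have "du x < 1" using x b(2)[of x] by simp
      then show ?thesis by (simp add: B_def)
    qed
  qed
  define M where "M = u0 + B * lmax"
  have ulow: "\<And>x. x \<in> {0..<lmax} \<Longrightarrow> u0 \<le> u x"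
  proof -
    fix x assume x: "x \<in> {0..<lmax}"
    have "u 0 \<le> u x"
    proof (rule DERIV_nonneg_imp_increasing_open[of 0 x u])
      show "0 \<le> x" using x by simp
      show "continuous_on {0..x} u" by (rule continuous_on_subset[OF ucont]) (use x in auto)
      fix t assume "0 < t" "t < x"
      then show "\<exists>y. (u has_real_derivative y) (at t) \<and> 0 \<le> y"
        using uat[of t] dupos[of t] x by (auto intro: less_imp_le)
    qed
    then show "u0 \<le> u x" using u0E by simp
  qed
  have uup: "\<And>x. x \<in> {0..<lmax} \<Longrightarrow> u x \<le> M"
  proof -
    fix x assume x: "x \<in> {0..<lmax}"
    have "(\<lambda>t. u t - B * t) 0 \<ge> (\<lambda>t. u t - B * t) x"
    proof (rule DERIV_nonpos_imp_decreasing_open[of 0 x "\<lambda>t. u t - B * t"])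
      show "0 \<le> x" using x by simp
      show "continuous_on {0..x} (\<lambda>t. u t - B * t)"
        by (intro continuous_intros continuous_on_subset[OF ucont]) (use x in auto)
      fix t assume "0 < t" "t < x"
      then show "\<exists>y. ((\<lambda>t. u t - B * t) has_real_derivative y) (at t) \<and> y \<le> 0"
        using uat[of t] duB[of t] x
        by (intro exI[of _ "du t - B"]) (auto intro!: derivative_eq_intros)
    qed
    then have "u x \<le> u0 + B * x" using u0E by simp
    also have "\<dots> \<le> M" unfolding M_def using x Bge by (intro add_left_mono mult_left_mono) auto
    finally show "u x \<le> M" .
  qed
  define p where "p = (\<lambda>x. u x powr (\<gamma> - 1))"
  have ppos: "\<And>x. x \<in> {0..<lmax} \<Longrightarrow> p x > 0" using upos by (force simp: p_def)
  have pg: "u x powr \<gamma> = p x * u x" if x: "x \<in> {0..<lmax}" for x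
  proof -
    have "u x powr \<gamma> = u x powr ((\<gamma> - 1) + 1)" by simp
    also have "\<dots> = p x * u x" unfolding p_def powr_add using upos[OF x] by simp
    finally show ?thesis .
  qed
  have pg1: "u x powr (\<gamma> + 1) = p x * u x * u x" if x: "x \<in> {0..<lmax}" for x
  proof -
    have "u x powr (\<gamma> + 1) = u x powr \<gamma> * u x powr 1" by (rule powr_add)
    then show ?thesis using pg[OF x] upos[OF x] by simp
  qed
  define P where "P = M powr (\<gamma> - 1)"
  have pP: "\<And>x. x \<in> {0..<lmax} \<Longrightarrow> p x \<le> P"
    unfolding p_def P_def using upos uup assms(1) by (intro powr_mono2) (auto intro: less_imp_le)
  define F1 where "F1 = (\<lambda>x. (\<gamma> + 1) * p x * u x * du x / K)"
  define F2 where "F2 = (\<lambda>x. du x * (\<gamma> * p x * u x * u x + K) / (u x * K))"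
  have e1: "\<And>x. x \<in> {0..<lmax} \<Longrightarrow> - da11 x = F1 x"
  proof -
    fix x assume x: "x \<in> {0..<lmax}"
    have d: "((\<lambda>t. 1 - u t powr (\<gamma> + 1) / u_s \<gamma> S0 J powr (\<gamma> + 1)) has_real_derivative
              - ((\<gamma> + 1) * u x powr (\<gamma> + 1 - 1) * du x / K)) (at x within {0..<lmax})"
      unfolding K_def us_def using uder[OF x] upos[OF x] us_pos
      by (auto intro!: derivative_eq_intros)
    have nb: "at x within {0..<lmax} \<noteq> bot"
    proof -
      have "x islimpt {x<..<lmax}" using x by (intro islimpt_greaterThanLessThan1) auto
      then have "x islimpt {0..<lmax}" by (rule islimpt_subset) (use x in auto)
      then show ?thesis using trivial_limit_within by blast
    qed
    have "da11 x = - ((\<gamma> + 1) * u x powr (\<gamma> + 1 - 1) * du x / K)"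
      using vector_derivative_unique_within[OF nb] da11 x d
      unfolding has_real_derivative_iff_has_vector_derivative by blast
    then show "- da11 x = F1 x" using pg[OF x] unfolding F1_def by simp
  qed
  have e2: "\<And>x. x \<in> {0..<lmax} \<Longrightarrow> - abar x = F2 x"
  proof -
    fix x assume x: "x \<in> {0..<lmax}"
    have o: "(p x * u x * u x - K) * du x = E x * (p x * u x)"
      using ode[OF x] pg[OF x] pg1[OF x] by simp
    have key: "p x * ((\<gamma> + 1) * du x * u x - E x) * u x = du x * (\<gamma> * p x * u x * u x + K)"
      using o by (simp add: algebra_simps)
    have "- abar x = p x * ((\<gamma> + 1) * du x * u x - E x) / K"
      unfolding abar_def p_def K_eq[symmetric] using Kpos by (simp add: field_simps)
    also have "\<dots> = p x * ((\<gamma> + 1) * du x * u x - E x) * u x / (u x * K)"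
      using upos[OF x] by simp
    also have "\<dots> = F2 x" unfolding F2_def key ..
    finally show "- abar x = F2 x" .
  qed
  have F1pos: "F1 x > 0" if x: "x \<in> {0..<lmax}" for x
    unfolding F1_def using ppos[OF x] upos[OF x] dupos[OF x] Kpos assms(1)
    by (intro divide_pos_pos mult_pos_pos add_pos_pos) auto
  have F2pos: "F2 x > 0" if x: "x \<in> {0..<lmax}" for x
    unfolding F2_def using ppos[OF x] upos[OF x] dupos[OF x] Kpos assms(1)
    by (intro divide_pos_pos mult_pos_pos add_pos_pos) auto
  have F3pos: "2 * F2 x + (2 * real m - 1) * F1 x > 0" if x: "x \<in> {0..<lmax}" for x m
  proof -
    have d: "2 * F2 x - F1 x = du x * ((\<gamma> - 1) * p x * u x * u x + 2 * K) / (u x * K)"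
      unfolding F1_def F2_def using upos[OF x] Kpos by (simp add: field_simps)
    have "du x * ((\<gamma> - 1) * p x * u x * u x + 2 * K) / (u x * K) > 0"
      using ppos[OF x] upos[OF x] dupos[OF x] Kpos assms(1)
      by (intro divide_pos_pos mult_pos_pos add_pos_pos) auto
    moreover have "(2 * real m - 1) * F1 x \<ge> - F1 x"
      using F1pos[OF x] by (simp add: algebra_simps)
    ultimately show ?thesis using d by linarith
  qed
  have cF1: "continuous_on {0..<lmax} F1"
    unfolding F1_def p_def using upos
    by (intro continuous_intros ucont cdu) (use Kpos in force)+
  have cF2: "continuous_on {0..<lmax} F2"
    unfolding F2_def p_def using upos Kpos
    by (intro continuous_intros ucont cdu) (use Kpos in force)+
  have u0pos: "u0 > 0" using assms(6) .
  define C1 where "C1 = (\<gamma> + 1) / K * (P * M)"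
  define C2 where "C2 = \<gamma> * (P * M) / K + 1 / u0"
  have bF1: "F1 x \<le> C1 * du x" if x: "x \<in> {0..<lmax}" for x
  proof -
    have "p x * u x \<le> P * M"
      using pP[OF x] uup[OF x] ppos[OF x] upos[OF x] by (intro mult_mono) auto
    then have "(\<gamma> + 1) / K * du x * (p x * u x) \<le> (\<gamma> + 1) / K * du x * (P * M)"
      using assms(1) Kpos dupos[OF x] by (intro mult_left_mono) auto
    then show ?thesis unfolding F1_def C1_def by (simp add: field_simps)
  qed
  have bF2: "F2 x \<le> C2 * du x" if x: "x \<in> {0..<lmax}" for x
  proof -
    have e: "F2 x = du x * (\<gamma> * (p x * u x) / K + 1 / u x)"
      unfolding F2_def using upos[OF x] Kpos by (simp add: field_simps)
    have "p x * u x \<le> P * M"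
      using pP[OF x] uup[OF x] ppos[OF x] upos[OF x] by (intro mult_mono) auto
    then have "\<gamma> * (p x * u x) / K \<le> \<gamma> * (P * M) / K"
      using assms(1) Kpos by (intro divide_right_mono mult_left_mono) auto
    moreover have "1 / u x \<le> 1 / u0"
      using ulow[OF x] u0pos by (intro divide_left_mono) auto
    ultimately have "\<gamma> * (p x * u x) / K + 1 / u x \<le> C2" unfolding C2_def by linarith
    then show ?thesis unfolding e using dupos[OF x] by (simp add: mult_left_mono mult.commute)
  qed
  have bF3: "2 * F2 x + (2 * real m - 1) * F1 x \<le> (2 * C2 + 5 * C1) * du x"
    if x: "x \<in> {0..<lmax}" and m: "m \<in> {0..3::nat}" for x m
  proof -
    have "(2 * real m - 1) * F1 x \<le> 5 * F1 x"
      using F1pos[OF x] m by (intro mult_right_mono) auto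
    then show ?thesis using bF1[OF x] bF2[OF x] by (simp add: algebra_simps)
  qed
  note G1 = generic[OF lm cF1 ballI[OF F1pos] ballI[OF bF1] du_lim]
  note G2 = generic[OF lm cF2 ballI[OF F2pos] ballI[OF bF2] du_lim]
  have G3: "(\<forall>L\<in>{0<..<lmax}. \<exists>lam>0. \<forall>x\<in>{0..L}. 2 * F2 x + (2 * real m - 1) * F1 x \<ge> lam)
     \<and> ((\<lambda>L. Inf ((\<lambda>x. 2 * F2 x + (2 * real m - 1) * F1 x) ` {0..L})) \<longlongrightarrow> 0) (at_left lmax)"
    if m: "m \<in> {0..3::nat}" for m
  proof -
    have c: "continuous_on {0..<lmax} (\<lambda>x. 2 * F2 x + (2 * real m - 1) * F1 x)"
      by (intro continuous_intros cF1 cF2)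
    show ?thesis using generic[OF lm c ballI[OF F3pos] ballI[OF bF3[OF _ m]] du_lim] by blast
  qed
  have cl: "closure (Omega L) = {0..L} \<times> {-1..1}" if "L > 0" for L
    unfolding Omega_def closure_Times using that by simp
  have img: "(\<lambda>q. f (fst q)) ` ({0..L} \<times> {-1..1::real}) = f ` {0..L}" for f :: "real \<Rightarrow> real" and L
  proof
    show "f ` {0..L} \<subseteq> (\<lambda>q. f (fst q)) ` ({0..L} \<times> {-1..1::real})"
    proof
      fix y assume "y \<in> f ` {0..L}"
      then obtain x where "x \<in> {0..L}" "y = f x" by blast
      then show "y \<in> (\<lambda>q. f (fst q)) ` ({0..L} \<times> {-1..1::real})"
        by (intro image_eqI[of _ _ "(x, 0)"]) auto
    qed
  qed auto
  have sub: "x \<in> {0..<lmax}" if "L \<in> {0<..<lmax}" "x \<in> {0..L}" for x L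
    using that by auto
  have ev: "eventually (\<lambda>L. L \<in> {0<..<lmax}) (at_left lmax)"
    using eventually_at_left_real[OF lm] .
  have I1: "Inf ((\<lambda>q. - da11 (fst q)) ` closure (Omega L)) = Inf (F1 ` {0..L})"
    if L: "L \<in> {0<..<lmax}" for L
  proof -
    have "(\<lambda>q. - da11 (fst q)) ` closure (Omega L) = (\<lambda>x. - da11 x) ` {0..L}"
      using cl[of L] L img[of "\<lambda>x. - da11 x" L] by simp
    also have "\<dots> = F1 ` {0..L}" by (intro image_cong refl e1 sub[OF L])
    finally show ?thesis by simp
  qed
  have I2: "Inf ((\<lambda>q. - abar (fst q)) ` closure (Omega L)) = Inf (F2 ` {0..L})"
    if L: "L \<in> {0<..<lmax}" for L
  proof -
    have "(\<lambda>q. - abar (fst q)) ` closure (Omega L) = (\<lambda>x. - abar x) ` {0..L}"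
      using cl[of L] L img[of "\<lambda>x. - abar x" L] by simp
    also have "\<dots> = F2 ` {0..L}" by (intro image_cong refl e2 sub[OF L])
    finally show ?thesis by simp
  qed
  have I3: "Inf ((\<lambda>q. - 2 * abar (fst q) - (2 * real m - 1) * da11 (fst q)) ` closure (Omega L))
      = Inf ((\<lambda>x. 2 * F2 x + (2 * real m - 1) * F1 x) ` {0..L})"
    if L: "L \<in> {0<..<lmax}" for L m
  proof -
    have "(\<lambda>q. - 2 * abar (fst q) - (2 * real m - 1) * da11 (fst q)) ` closure (Omega L)
       = (\<lambda>x. - 2 * abar x - (2 * real m - 1) * da11 x) ` {0..L}"
      using cl[of L] L img[of "\<lambda>x. - 2 * abar x - (2 * real m - 1) * da11 x" L] by simp
    also have "\<dots> = (\<lambda>x. 2 * F2 x + (2 * real m - 1) * F1 x) ` {0..L}"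
    proof (intro image_cong refl)
      fix x assume "x \<in> {0..L}"
      then have x: "x \<in> {0..<lmax}" using sub[OF L] by blast
      show "- 2 * abar x - (2 * real m - 1) * da11 x = 2 * F2 x + (2 * real m - 1) * F1 x"
        using e1[OF x, symmetric] e2[OF x, symmetric] by (simp add: algebra_simps)
    qed
    finally show ?thesis by simp
  qed
  show ?thesis
  proof (intro conjI ballI)
    fix L assume L: "L \<in> {0<..<lmax}"
    obtain l1 where l1: "l1 > 0" "\<forall>x\<in>{0..L}. F1 x \<ge> l1" using G1(1) L by blast
    obtain l2 where l2: "l2 > 0" "\<forall>x\<in>{0..L}. F2 x \<ge> l2" using G2(1) L by blast
    have "\<exists>l. l > 0 \<and> (\<forall>x\<in>{0..L}. 2 * F2 x + (2 * real m - 1) * F1 x \<ge> l)" if "m \<in> {0..3::nat}" for m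
      using G3[OF that] L by blast
    then obtain l3 where l3: "\<And>m. m \<in> {0..3::nat} \<Longrightarrow> l3 m > 0 \<and>
        (\<forall>x\<in>{0..L}. 2 * F2 x + (2 * real m - 1) * F1 x \<ge> l3 m)" by metis
    define lam where "lam = min l1 (min l2 (min (l3 0) (min (l3 1) (min (l3 2) (l3 3)))))"
    have lamin: "lam \<le> l1" "lam \<le> l2" "\<And>m. m \<in> {0..3::nat} \<Longrightarrow> lam \<le> l3 m"
    proof -
      fix m :: nat assume "m \<in> {0..3}"
      then have "m = 0 \<or> m = 1 \<or> m = 2 \<or> m = 3" by auto
      then show "lam \<le> l3 m" unfolding lam_def by auto
    qed (auto simp: lam_def)
    have "lam > 0" unfolding lam_def using l1 l3[of 0] l3[of 1] l3[of 2] l3[of 3] l2 by auto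
    moreover have "\<forall>q\<in>closure (Omega L).
             - da11 (fst q) \<ge> lam \<and> - abar (fst q) \<ge> lam \<and>
             (\<forall>m\<in>{0..3::nat}. - 2 * abar (fst q) - (2 * real m - 1) * da11 (fst q) \<ge> lam)"
    proof
      fix q assume q: "q \<in> closure (Omega L)"
      then have xL: "fst q \<in> {0..L}" using cl[of L] L by auto
      then have x: "fst q \<in> {0..<lmax}" using sub[OF L] by blast
      show "- da11 (fst q) \<ge> lam \<and> - abar (fst q) \<ge> lam \<and>
             (\<forall>m\<in>{0..3::nat}. - 2 * abar (fst q) - (2 * real m - 1) * da11 (fst q) \<ge> lam)"
      proof (intro conjI ballI)
        show "- da11 (fst q) \<ge> lam" using e1[OF x] l1(2) xL lamin(1) by force
        show "- abar (fst q) \<ge> lam" using e2[OF x] l2(2) xL lamin(2) by force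
        fix m :: nat assume m: "m \<in> {0..3}"
        have "- 2 * abar (fst q) - (2 * real m - 1) * da11 (fst q) = 2 * F2 (fst q) + (2 * real m - 1) * F1 (fst q)"
          using e1[OF x, symmetric] e2[OF x, symmetric] by (simp add: algebra_simps)
        then show "- 2 * abar (fst q) - (2 * real m - 1) * da11 (fst q) \<ge> lam"
          using l3[OF m] xL lamin(3)[OF m] by force
      qed
    qed
    ultimately show "\<exists>lam>0. \<forall>q\<in>closure (Omega L).
             - da11 (fst q) \<ge> lam \<and> - abar (fst q) \<ge> lam \<and>
             (\<forall>m\<in>{0..3::nat}. - 2 * abar (fst q) - (2 * real m - 1) * da11 (fst q) \<ge> lam)" by blast
  next
    show "((\<lambda>L. Inf ((\<lambda>q. - da11 (fst q)) ` closure (Omega L))) \<longlongrightarrow> 0) (at_left lmax)"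
      using G1(2) by (subst tendsto_cong[OF eventually_mono[OF ev I1]]) auto
  next
    show "((\<lambda>L. Inf ((\<lambda>q. - abar (fst q)) ` closure (Omega L))) \<longlongrightarrow> 0) (at_left lmax)"
      using G2(2) by (subst tendsto_cong[OF eventually_mono[OF ev I2]]) auto
  next
    fix m :: nat assume m: "m \<in> {0..3}"
    show "((\<lambda>L. Inf ((\<lambda>q. - 2 * abar (fst q) - (2 * real m - 1) * da11 (fst q))
                        ` closure (Omega L))) \<longlongrightarrow> 0) (at_left lmax)"
      using G3[OF m] by (subst tendsto_cong[OF eventually_mono[OF ev I3]]) auto
  qed
qed

end
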